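(* Let $M\subset\mathbb{Z}^d$ be a positive affine monoid such that the group $\operatorname{gp}(M)$ generated by $M$ equals $\mathbb{Z}^d$. If $M$ satisfies the integral Carath\'eodory property (ICP), then $M=\mathbb{R}_+M\cap\mathbb{Z}^d$, and every element of $M$ is $f$-covered, i.e. every $x\in M$ can be written as $x=a_1y_1+\dots+a_dy_d$ with $a_1,\dots,a_d\in\mathbb{Z}_{\ge 0}$ and $y_1,\dots,y_d\in\operatorname{Hilb}(M)$ linearly independent.
   Context: An affine monoid is a finitely generated submonoid of $\mathbb{Z}^d$; it is positive if $0$ is its only invertible element. $\operatorname{Hilb}(M)$ is the unique minimal generating set of $M$, consisting of the nonzero elements of $M$ that cannot be written as $x+y$ with $x,y\in M\setminus\{0\}$. $M$ satisfies (ICP) if every element of $M$ can be written as $a_1x_1+\dots+a_dx_d$ with $x_i\in\operatorname{Hilb}(M)$ and $a_i\in\mathbb{Z}_{\ge0}$ (at most $d$ elements of the Hilbert basis, with nonnegative integer coefficients). $\mathbb{R}_+M$ denotes the cone of nonnegative real linear combinations of elements of $M$. *)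

theory Defs
  imports "HOL-Analysis.Analysis"
begin

text \<open>Z^d is modelled as int ^ 'n with d = CARD('n).\<close>

definition rvec :: "int ^ 'n \<Rightarrow> real ^ 'n" where
  "rvec x = (\<chi> i. real_of_int (x $ i))"

definition monoid_gen :: "(int ^ 'n) set \<Rightarrow> (int ^ 'n) set" where
  "monoid_gen G = {x. \<exists>S a. finite S \<and> S \<subseteq> G \<and> x = (\<Sum>g\<in>S. of_nat (a g) *s g)}"

definition affine_monoid :: "(int ^ 'n) set \<Rightarrow> bool" where
  "affine_monoid M \<longleftrightarrow> (\<exists>G. finite G \<and> M = monoid_gen G)"

definition positive_monoid :: "(int ^ 'n) set \<Rightarrow> bool" where
  "positive_monoid M \<longleftrightarrow> (\<forall>x\<in>M. - x \<in> M \<longrightarrow> x = 0)"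

definition gp :: "(int ^ 'n) set \<Rightarrow> (int ^ 'n) set" where
  "gp M = \<Inter>{H. M \<subseteq> H \<and> 0 \<in> H \<and> (\<forall>x\<in>H. \<forall>y\<in>H. x + y \<in> H) \<and> (\<forall>x\<in>H. - x \<in> H)}"

definition Hilb :: "(int ^ 'n) set \<Rightarrow> (int ^ 'n) set" where
  "Hilb M = {x \<in> M. x \<noteq> 0 \<and>
     \<not> (\<exists>y z. y \<in> M - {0} \<and> z \<in> M - {0} \<and> x = y + z)}"

text \<open>(ICP): every element is a nonnegative integer combination of d = CARD('n)
  elements of the Hilbert basis (indexed by 'n, repetitions allowed).\<close>
definition ICP :: "(int ^ 'n) set \<Rightarrow> bool" where
  "ICP M \<longleftrightarrow> (\<forall>x\<in>M. \<exists>(y :: 'n \<Rightarrow> int ^ 'n) (a :: 'n \<Rightarrow> nat).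
      (\<forall>i. y i \<in> Hilb M) \<and> x = (\<Sum>i\<in>UNIV. of_nat (a i) *s y i))"

definition real_cone :: "(int ^ 'n) set \<Rightarrow> (real ^ 'n) set" where
  "real_cone M = {v. \<exists>S c. finite S \<and> S \<subseteq> M \<and> (\<forall>g\<in>S. c g \<ge> 0) \<and>
      v = (\<Sum>g\<in>S. c g *\<^sub>R rvec g)}"

definition f_covered :: "(int ^ 'n) set \<Rightarrow> int ^ 'n \<Rightarrow> bool" where
  "f_covered M x \<longleftrightarrow> (\<exists>(y :: 'n \<Rightarrow> int ^ 'n) (a :: 'n \<Rightarrow> nat).
      (\<forall>i. y i \<in> Hilb M) \<and> inj (\<lambda>i. rvec (y i)) \<and> independent (range (\<lambda>i. rvec (y i))) \<and>
      x = (\<Sum>i\<in>UNIV. of_nat (a i) *s y i))"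

end

theory Submission
  imports Defs
begin

lemma rvec_add: "rvec (x + y) = rvec x + rvec y"
  by (simp add: rvec_def vec_eq_iff)
lemma rvec_diff: "rvec (x - y) = rvec x - rvec y"
  by (simp add: rvec_def vec_eq_iff)
lemma rvec_zero[simp]: "rvec 0 = 0"
  by (simp add: rvec_def vec_eq_iff)
lemma rvec_smult: "rvec (c *s x) = of_int c *\<^sub>R rvec x"
  by (simp add: rvec_def vec_eq_iff)
lemma rvec_comp: "rvec x $ i = real_of_int (x $ i)"
  by (simp add: rvec_def)
lemma rvec_sum: "rvec (\<Sum>i\<in>I. f i) = (\<Sum>i\<in>I. rvec (f i))"
  by (induction I rule: infinite_finite_induct) (auto simp: rvec_add)
lemma rvec_inj: "rvec x = rvec y \<Longrightarrow> x = y"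
  by (simp add: rvec_def vec_eq_iff)
lemma rvec_axis: "rvec (axis i 1) = axis i 1"
  by (simp add: rvec_def vec_eq_iff axis_def)

lemma mg_iff:
  assumes "finite G"
  shows "x \<in> monoid_gen G \<longleftrightarrow> (\<exists>a. x = (\<Sum>g\<in>G. of_nat (a g) *s g))"
proof
  assume "x \<in> monoid_gen G"
  then obtain S a where S: "finite S" "S \<subseteq> G" "x = (\<Sum>g\<in>S. of_nat (a g) *s g)"
    unfolding monoid_gen_def by blast
  define b where "b g = (if g \<in> S then a g else 0)" for g
  have "(\<Sum>g\<in>G. of_nat (b g) *s g) = (\<Sum>g\<in>S. of_nat (b g) *s g)"
    by (rule sum.mono_neutral_right) (use S assms in \<open>auto simp: b_def\<close>)
  also have "\<dots> = x" using S by (simp add: b_def)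
  finally show "\<exists>a. x = (\<Sum>g\<in>G. of_nat (a g) *s g)" by metis
next
  assume "\<exists>a. x = (\<Sum>g\<in>G. of_nat (a g) *s g)"
  then show "x \<in> monoid_gen G" unfolding monoid_gen_def using assms by blast
qed

lemma mg_0: "0 \<in> monoid_gen G"
  unfolding monoid_gen_def by (rule CollectI, rule exI[of _ "{}"]) auto

lemma mg_add:
  assumes "finite G" "x \<in> monoid_gen G" "y \<in> monoid_gen G"
  shows "x + y \<in> monoid_gen G"
proof -
  obtain a where a: "x = (\<Sum>g\<in>G. of_nat (a g) *s g)" using assms(2) unfolding mg_iff[OF assms(1)] by blast
  obtain b where b: "y = (\<Sum>g\<in>G. of_nat (b g) *s g)" using assms(3) unfolding mg_iff[OF assms(1)] by blast
  have "x + y = (\<Sum>g\<in>G. of_nat (a g + b g) *s g)"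
    unfolding a b sum.distrib[symmetric] by (simp add: vector_sadd_rdistrib)
  then show ?thesis unfolding mg_iff[OF assms(1)] by (rule exI[of _ "\<lambda>g. a g + b g"])
qed

lemma mg_G: "g \<in> G \<Longrightarrow> g \<in> monoid_gen G"
  unfolding monoid_gen_def
  by (rule CollectI, rule exI[of _ "{g}"], rule exI[of _ "\<lambda>_. 1"]) auto

lemma mg_smult:
  assumes "finite G" "x \<in> monoid_gen G"
  shows "of_nat k *s x \<in> monoid_gen G"
proof (induction k)
  case 0 then show ?case using mg_0 by (simp add: vec_eq_iff)
next
  case (Suc k)
  have "of_nat (Suc k) *s x = x + of_nat k *s x" by (simp add: vector_sadd_rdistrib)
  then show ?case using mg_add[OF assms(1) assms(2) Suc] by simp
qed

lemma mg_sum: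
  assumes "finite G" "\<And>i. i \<in> I \<Longrightarrow> f i \<in> monoid_gen G"
  shows "(\<Sum>i\<in>I. f i) \<in> monoid_gen G"
  using assms(2)
proof (induction I rule: infinite_finite_induct)
  case (infinite A) then show ?case using mg_0 by simp
next
  case empty then show ?case using mg_0 by simp
next
  case (insert x F) then show ?case using mg_add[OF assms(1)] by simp
qed

lemma Hilb_sub_M: "Hilb M \<subseteq> M" unfolding Hilb_def by auto

lemma Hilb_sub_G:
  assumes "finite G"
  shows "Hilb (monoid_gen G) \<subseteq> G"
proof
  fix x assume xH: "x \<in> Hilb (monoid_gen G)"
  then have xM: "x \<in> monoid_gen G" and x0: "x \<noteq> 0"
    and irr: "\<And>y z. y \<in> monoid_gen G - {0} \<Longrightarrow> z \<in> monoid_gen G - {0} \<Longrightarrow> x \<noteq> y + z"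
    unfolding Hilb_def by blast+
  obtain a where a: "x = (\<Sum>g\<in>G. of_nat (a g) *s g)" using xM unfolding mg_iff[OF assms] by blast
  obtain g0 where g0: "g0 \<in> G" "of_nat (a g0) *s g0 \<noteq> (0::int^'a)"
  proof (rule ccontr)
    assume "\<not> thesis"
    then have "\<forall>g\<in>G. of_nat (a g) *s g = (0::int^'a)" using that by blast
    then have "x = 0" unfolding a by (intro sum.neutral) auto
    with x0 show False by simp
  qed
  define r where "r = (\<Sum>g\<in>G-{g0}. of_nat (a g) *s g)"
  have xr: "x = of_nat (a g0) *s g0 + r"
    unfolding a r_def using g0 assms by (simp add: sum.remove)
  have rM: "r \<in> monoid_gen G" unfolding r_def
    by (rule mg_sum[OF assms]) (auto intro: mg_smult[OF assms] mg_G)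
  have uM: "of_nat (a g0) *s g0 \<in> monoid_gen G" by (rule mg_smult[OF assms mg_G[OF g0(1)]])
  have r0: "r = 0" using irr[of "of_nat (a g0) *s g0" r] xr rM uM g0 by blast
  have gne: "g0 \<noteq> 0" using g0 by auto
  have ane: "a g0 \<noteq> 0" using g0 by auto
  show "x \<in> G"
  proof (cases "a g0 = 1")
    case True then show ?thesis using xr r0 g0 by simp
  next
    case False
    then obtain k where k: "a g0 = Suc k" "k \<noteq> 0" using ane by (cases "a g0") auto
    have "x = g0 + of_nat k *s g0" using xr r0 k by (simp add: vector_sadd_rdistrib)
    moreover have "of_nat k *s g0 \<noteq> 0" using k gne by simp
    ultimately have False using irr[of g0 "of_nat k *s g0"] mg_G[OF g0(1)] mg_smult[OF assms mg_G[OF g0(1)]] gne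
      by blast
    then show ?thesis ..
  qed
qed

lemma gp_sub:
  "gp M \<subseteq> {a - b | a b. a \<in> M \<and> b \<in> M}" if "0 \<in> M" "\<And>x y. x \<in> M \<Longrightarrow> y \<in> M \<Longrightarrow> x + y \<in> M"
proof -
  let ?T = "{a - b | a b. a \<in> M \<and> b \<in> M}"
  have "M \<subseteq> ?T" using that by force
  moreover have "0 \<in> ?T" using that by force
  moreover have "\<forall>x\<in>?T. \<forall>y\<in>?T. x + y \<in> ?T"
  proof (intro ballI)
    fix x y assume "x \<in> ?T" "y \<in> ?T"
    then obtain a b c d where "x = a - b" "y = c - d" "a \<in> M" "b \<in> M" "c \<in> M" "d \<in> M" by blast
    moreover have "x + y = (a + c) - (b + d)" using \<open>x = a - b\<close> \<open>y = c - d\<close> by simp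
    ultimately show "x + y \<in> ?T" using that(2)[of a c] that(2)[of b d] by blast
  qed
  moreover have "\<forall>x\<in>?T. - x \<in> ?T" by force
  ultimately show ?thesis unfolding gp_def by blast
qed



definition smat :: "('n \<Rightarrow> int ^ 'n) \<Rightarrow> real ^ 'n ^ 'n" where
  "smat \<sigma> = (\<chi> r i. real_of_int (\<sigma> i $ r))"

lemma smat_mult: "smat \<sigma> *v \<xi> = (\<Sum>i\<in>UNIV. \<xi> $ i *\<^sub>R rvec (\<sigma> i))"
  by (simp add: vec_eq_iff smat_def matrix_vector_mult_def rvec_def sum_component mult.commute)

lemma smat_columns: "columns (smat \<sigma>) = range (\<lambda>i. rvec (\<sigma> i))"
  by (auto simp: columns_def column_def smat_def rvec_def)

lemma smat_det_nz:
  assumes "span (range (\<lambda>i. rvec (\<sigma> i))) = UNIV"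
  shows "det (smat \<sigma>) \<noteq> 0"
proof -
  have "\<exists>B. smat \<sigma> ** B = mat 1"
    using matrix_right_invertible_span_columns[of "smat \<sigma>"] assms
    by (simp add: span_vec_eq smat_columns)
  then show ?thesis using invertible_right_inverse invertible_det_nz by blast
qed

lemma smat_solve:
  assumes "span (range (\<lambda>i. rvec (\<sigma> i))) = UNIV"
  shows "\<exists>\<xi>. smat \<sigma> *v \<xi> = v"
proof -
  obtain B where B: "smat \<sigma> ** B = mat 1"
    using matrix_right_invertible_span_columns[of "smat \<sigma>"] assms
    by (auto simp: span_vec_eq smat_columns)
  have "smat \<sigma> *v (B *v v) = v" by (simp add: matrix_vector_mul_assoc B)
  then show ?thesis by blast
qed

lemma smat_inj:
  assumes "span (range (\<lambda>i. rvec (\<sigma> i))) = UNIV" "smat \<sigma> *v \<xi> = smat \<sigma> *v \<eta>"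
  shows "\<xi> = \<eta>"
proof -
  have "invertible (smat \<sigma>)" using smat_det_nz[OF assms(1)] invertible_det_nz by blast
  then obtain B where B: "B ** smat \<sigma> = mat 1" unfolding invertible_def by blast
  have "(B ** smat \<sigma>) *v \<xi> = (B ** smat \<sigma>) *v \<eta>"
    by (simp add: matrix_vector_mul_assoc[symmetric] assms(2))
  then show ?thesis by (simp add: B)
qed

lemma det_Ints:
  fixes A :: "real ^ 'n ^ 'n"
  assumes "\<And>i j. A $ i $ j \<in> \<int>"
  shows "det A \<in> \<int>"
  unfolding det_def
  by (intro Ints_sum Ints_mult Ints_prod) (auto simp: assms)

lemma smat_coord_Ints:
  fixes \<sigma> :: "'n \<Rightarrow> int ^ 'n"
  assumes "smat \<sigma> *v \<xi> = rvec w"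
  shows "\<xi> $ k * det (smat \<sigma>) \<in> \<int>"
proof -
  have "det ((\<chi> i j. if j = k then (smat \<sigma> *v \<xi>) $ i else smat \<sigma> $ i $ j) :: real^'n^'n) \<in> \<int>"
    unfolding assms by (rule det_Ints) (auto simp: rvec_def smat_def)
  then show ?thesis using cramer_lemma[where A="smat \<sigma>" and k=k and x=\<xi>] by simp
qed

lemma smat_det_Ints: "det (smat \<sigma>) \<in> \<int>"
  by (rule det_Ints) (auto simp: smat_def)

lemma good_indep:
  fixes \<sigma> :: "'n \<Rightarrow> int ^ 'n"
  assumes "span (range (\<lambda>i. rvec (\<sigma> i))) = UNIV"
  shows "inj (\<lambda>i. rvec (\<sigma> i)) \<and> independent (range (\<lambda>i. rvec (\<sigma> i)))"
proof -
  let ?R = "range (\<lambda>i. rvec (\<sigma> i))"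
  have fin: "finite ?R" by simp
  have dimU: "dim (UNIV :: (real^'n) set) = CARD('n)" by simp
  have "dim (UNIV :: (real^'n) set) \<le> card ?R"
    by (rule span_card_ge_dim) (use assms in auto)
  moreover have "card ?R \<le> CARD('n)" by (rule card_image_le) simp
  ultimately have cR: "card ?R = CARD('n)" using dimU by linarith
  then have "inj (\<lambda>i. rvec (\<sigma> i))" using inj_on_iff_eq_card[of UNIV "\<lambda>i. rvec (\<sigma> i)"] by simp
  moreover have "independent ?R"
    by (rule card_le_dim_spanning[of _ UNIV]) (use assms cR dimU in auto)
  ultimately show ?thesis by blast
qed

lemma finite_box: "finite {v :: int ^ 'n. \<forall>i. \<bar>v $ i\<bar> \<le> B}"
proof -
  have "{v :: int ^ 'n. \<forall>i. \<bar>v $ i\<bar> \<le> B} \<subseteq> vec_lambda ` (PiE UNIV (\<lambda>_. {-B..B}))"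
  proof
    fix v :: "int^'n" assume "v \<in> {v. \<forall>i. \<bar>v $ i\<bar> \<le> B}"
    then have "(\<lambda>i. v $ i) \<in> PiE UNIV (\<lambda>_. {-B..B})" by (auto simp: PiE_UNIV_domain abs_le_iff) (metis minus_le_iff)
    moreover have "v = vec_lambda (\<lambda>i. v $ i)" by simp
    ultimately show "v \<in> vec_lambda ` (PiE UNIV (\<lambda>_. {-B..B}))" by blast
  qed
  moreover have "finite (vec_lambda ` (PiE UNIV (\<lambda>_. {-B..B}) :: ('n \<Rightarrow> int) set))"
    by (intro finite_imageI finite_PiE) auto
  ultimately show ?thesis by (rule finite_subset)
qed

lemma finite_funs: "finite H \<Longrightarrow> finite {\<sigma> :: 'n::finite \<Rightarrow> 'a. \<forall>i. \<sigma> i \<in> H}"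
proof -
  assume "finite H"
  then have "finite (PiE (UNIV::'n set) (\<lambda>_. H))" by (intro finite_PiE) auto
  moreover have "PiE (UNIV::'n set) (\<lambda>_. H) = {\<sigma>. \<forall>i. \<sigma> i \<in> H}" by (auto simp: PiE_UNIV_domain)
  ultimately show ?thesis by simp
qed


lemma subsingleton_finite: "(\<And>a b. a \<in> S \<Longrightarrow> b \<in> S \<Longrightarrow> a = b) \<Longrightarrow> finite S"
proof (cases "S = {}")
  case False
  assume h: "\<And>a b. a \<in> S \<Longrightarrow> b \<in> S \<Longrightarrow> a = b"
  then obtain a where "a \<in> S" using False by blast
  then have "S \<subseteq> {a}" using h by blast
  then show ?thesis using finite_subset by blast
qed simp

lemma generic:
  fixes G :: "(int ^ 'n) set" and H :: "(int ^ 'n) set"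
  assumes fG: "finite G" and HM: "H \<subseteq> monoid_gen G"
    and spanH: "span (rvec ` H) = UNIV"
    and fW: "finite \<W>" and sW: "\<And>W. W \<in> \<W> \<Longrightarrow> subspace W \<and> W \<noteq> UNIV"
  shows "\<exists>m\<in>monoid_gen G. v + rvec m \<notin> \<Union>\<W>"
  using fW sW
proof (induction \<W> rule: finite_induct)
  case empty
  then show ?case using mg_0 by auto
next
  case (insert W \<W>)
  then obtain m where mM: "m \<in> monoid_gen G" and mW: "v + rvec m \<notin> \<Union>\<W>" by auto
  define u where "u = v + rvec m"
  have sWW: "subspace W" "W \<noteq> UNIV" using insert.prems by auto
  show ?case
  proof (cases "u \<in> W")
    case False
    then show ?thesis using mM mW u_def by auto
  next
    case True
    obtain h where hH: "h \<in> H" and hW: "rvec h \<notin> W"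
    proof (rule ccontr)
      assume "\<not> thesis"
      then have "rvec ` H \<subseteq> W" using that by blast
      then have "span (rvec ` H) \<subseteq> W" using sWW(1) by (simp add: span_minimal)
      then show False using spanH sWW(2) by auto
    qed
    define Bad where "Bad = {t::nat. u + real t *\<^sub>R rvec h \<in> \<Union>(insert W \<W>)}"
    have Bad_sub: "Bad \<subseteq> {0} \<union> (\<Union>W'\<in>\<W>. {t::nat. u + real t *\<^sub>R rvec h \<in> W'})"
    proof
      fix t assume "t \<in> Bad"
      then have "u + real t *\<^sub>R rvec h \<in> W \<or> (\<exists>W'\<in>\<W>. u + real t *\<^sub>R rvec h \<in> W')"
        unfolding Bad_def by auto
      then show "t \<in> {0} \<union> (\<Union>W'\<in>\<W>. {t::nat. u + real t *\<^sub>R rvec h \<in> W'})"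
      proof
        assume a: "u + real t *\<^sub>R rvec h \<in> W"
        have "real t *\<^sub>R rvec h \<in> W"
          using subspace_diff[OF sWW(1) a True] by simp
        then have "t = 0" using hW sWW(1)
          by (metis add_0 of_nat_eq_0_iff subspace_scale u_def True a
              diff_add_cancel scaleR_right_diff_distrib scaleR_one
              divideR_right field_class.field_divide_inverse)
        then show ?thesis by simp
      qed auto
    qed
    have "finite {t::nat. u + real t *\<^sub>R rvec h \<in> W'}" if W'I: "W' \<in> \<W>" for W'
    proof (rule subsingleton_finite)
      fix a b assume a: "a \<in> {t::nat. u + real t *\<^sub>R rvec h \<in> W'}" and b: "b \<in> {t::nat. u + real t *\<^sub>R rvec h \<in> W'}"
      have sW': "subspace W'" using insert.prems W'I by auto
      have uW': "u \<notin> W'" using mW W'I u_def by auto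
      show "a = b"
      proof (rule ccontr)
        assume ab: "a \<noteq> b"
        have "(u + real a *\<^sub>R rvec h) - (u + real b *\<^sub>R rvec h) \<in> W'"
          using subspace_diff[OF sW'] a b by blast
        then have "(real a - real b) *\<^sub>R rvec h \<in> W'" by (simp add: scaleR_left_diff_distrib)
        then have "inverse (real a - real b) *\<^sub>R ((real a - real b) *\<^sub>R rvec h) \<in> W'"
          using subspace_scale[OF sW'] by blast
        then have hW': "rvec h \<in> W'" using ab by simp
        then have "real a *\<^sub>R rvec h \<in> W'" using subspace_scale[OF sW'] by blast
        then have "(u + real a *\<^sub>R rvec h) - real a *\<^sub>R rvec h \<in> W'"
          using subspace_diff[OF sW'] a by blast
        then show False using uW' by simp
      qed
    qed
    then have "finite Bad" using Bad_sub insert.hyps(1) by (meson finite_UN_I finite_Un finite.emptyI finite_insert finite_subset)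
    then obtain t where tB: "t \<notin> Bad" using ex_new_if_finite[OF infinite_UNIV_nat] by blast
    define m' where "m' = m + of_nat t *s h"
    have m'M: "m' \<in> monoid_gen G" unfolding m'_def
      using mg_add[OF fG mM mg_smult[OF fG]] HM hH by blast
    have "v + rvec m' = u + real t *\<^sub>R rvec h"
      by (simp add: m'_def u_def rvec_add rvec_smult)
    then have "v + rvec m' \<notin> \<Union>(insert W \<W>)" using tB unfolding Bad_def by simp
    then show ?thesis using m'M by blast
  qed
qed

lemma span_H:
  fixes M :: "(int ^ 'n) set"
  assumes gp: "\<And>p. \<exists>a\<in>M. \<exists>b\<in>M. p = a - b"
    and rep: "\<And>x. x \<in> M \<Longrightarrow> rvec x \<in> span (rvec ` H)"
  shows "span (rvec ` H) = UNIV"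
proof -
  have "rvec p \<in> span (rvec ` H)" for p
  proof -
    obtain a b where "a \<in> M" "b \<in> M" "p = a - b" using gp by blast
    then show ?thesis using rep[of a] rep[of b] by (simp add: rvec_diff span_diff)
  qed
  then have "Basis \<subseteq> span (rvec ` H)"
    by (auto simp: Basis_vec_def) (metis rvec_axis)
  then have "span Basis \<subseteq> span (rvec ` H)" by (rule span_minimal[OF _ subspace_span])
  then show ?thesis by (simp add: top.extremum_uniqueI)
qed


lemma main:
  fixes M :: "(int ^ 'n) set" and G :: "(int ^ 'n) set"
  assumes fG: "finite G" and MG: "M = monoid_gen G"
    and gp: "\<And>p. \<exists>a\<in>M. \<exists>b\<in>M. p = a - b"
    and icp: "ICP M"
    and xc: "rvec x \<in> real_cone M"
  shows "x \<in> M \<and> f_covered M x"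
proof -
  define H where "H = Hilb M"
  have fH: "finite H" unfolding H_def MG by (rule finite_subset[OF Hilb_sub_G[OF fG] fG])
  have HM: "H \<subseteq> M" unfolding H_def by (rule Hilb_sub_M)
  have icp': "\<exists>(y::'n \<Rightarrow> int^'n) \<alpha>. (\<forall>i. y i \<in> H) \<and> z = (\<Sum>i\<in>UNIV. of_nat (\<alpha> i) *s y i)" if "z \<in> M" for z
    unfolding H_def using bspec[OF icp[unfolded ICP_def] that] .
  have rep: "rvec z \<in> span (rvec ` H)" if zM0: "z \<in> M" for z
  proof -
    obtain y :: "'n \<Rightarrow> int^'n" and \<alpha> where y: "\<forall>i. y i \<in> H" "z = (\<Sum>i\<in>UNIV. of_nat (\<alpha> i) *s y i)" using icp'[OF zM0] by blast
    have "rvec z = (\<Sum>i\<in>UNIV. real (\<alpha> i) *\<^sub>R rvec (y i))" using y(2) by (simp add: rvec_sum rvec_smult)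
    also have "\<dots> \<in> span (rvec ` H)" using y(1) by (intro span_sum span_scale span_base) auto
    finally show ?thesis .
  qed
  have spanH: "span (rvec ` H) = UNIV" by (rule span_H[OF gp rep])
  have M0: "0 \<in> M" using mg_0 MG by simp
  have Madd: "u + v \<in> M" if "u \<in> M" "v \<in> M" for u v using mg_add[OF fG] that MG by simp
  have Msm: "of_nat k *s u \<in> M" if "u \<in> M" for u k using mg_smult[OF fG] that MG by simp
  have Msum: "(\<Sum>i\<in>I. f i) \<in> M" if "\<And>i. i \<in> I \<Longrightarrow> f i \<in> M" for I and f :: "'b \<Rightarrow> int^'n"
    using mg_sum[OF fG, of I f] that MG by simp

  define Fun where "Fun = {\<sigma> :: 'n \<Rightarrow> int ^ 'n. \<forall>i. \<sigma> i \<in> H}"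
  have fFun: "finite Fun" unfolding Fun_def by (rule finite_funs[OF fH])
  define Good where "Good = {\<sigma> \<in> Fun. span (range (\<lambda>i. rvec (\<sigma> i))) = UNIV}"
  have fGood: "finite Good" using fFun unfolding Good_def by simp
  define Dr where "Dr = (\<Prod>\<sigma>\<in>Good. det (smat \<sigma>))"
  have DrI: "Dr \<in> \<int>" unfolding Dr_def by (intro Ints_prod smat_det_Ints)
  have Dr0: "Dr \<noteq> 0" unfolding Dr_def using fGood smat_det_nz by (auto simp: Good_def)
  obtain Di where Di: "Dr = of_int Di" using DrI Ints_cases by blast
  define Dn where "Dn = nat \<bar>Di\<bar>"
  have Dn1: "Dn \<ge> 1" using Dr0 Di unfolding Dn_def by auto
  have DnDr: "real Dn = \<bar>Dr\<bar>" unfolding Dn_def Di by simp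
  have coordD: "real Dn * \<xi> $ k \<in> \<int>" if sG: "\<sigma> \<in> Good" and eq: "smat \<sigma> *v \<xi> = rvec w" for \<sigma> \<xi> w k
  proof -
    define q where "q = (\<Prod>\<tau>\<in>Good - {\<sigma>}. det (smat \<tau>))"
    have qI: "q \<in> \<int>" unfolding q_def by (intro Ints_prod smat_det_Ints)
    have "Dr = det (smat \<sigma>) * q" unfolding Dr_def q_def using fGood sG by (simp add: prod.remove)
    then have eq1: "real Dn * \<xi> $ k = sgn Dr * q * (\<xi> $ k * det (smat \<sigma>))"
      unfolding DnDr by (simp add: abs_sgn mult_ac)
    have sI: "sgn Dr \<in> \<int>" by (simp add: sgn_real_def)
    have "sgn Dr * q * (\<xi> $ k * det (smat \<sigma>)) \<in> \<int>"
      using Ints_mult[OF Ints_mult[OF sI qI] smat_coord_Ints[OF eq, of k]] .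
    then show ?thesis unfolding eq1 .
  qed

  obtain S lam where S: "finite S" "S \<subseteq> M" "\<And>g. g \<in> S \<Longrightarrow> lam g \<ge> 0"
    and xS: "rvec x = (\<Sum>g\<in>S. lam g *\<^sub>R rvec g)"
    using xc unfolding real_cone_def by blast
  define N where "N j = 1 + j * Dn" for j :: nat
  define pj where "pj j = of_nat (N j) *s x - (\<Sum>g\<in>S. \<lfloor>real (N j) * lam g\<rfloor> *s g)" for j
  have rpj: "rvec (pj j) = (\<Sum>g\<in>S. (real (N j) * lam g - of_int \<lfloor>real (N j) * lam g\<rfloor>) *\<^sub>R rvec g)" for j
  proof -
    have "rvec (of_nat (N j) *s x) = (\<Sum>g\<in>S. (real (N j) * lam g) *\<^sub>R rvec g)"
      by (simp add: rvec_smult xS scaleR_sum_right)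
    then show ?thesis unfolding pj_def
      by (simp add: rvec_diff rvec_sum rvec_smult sum_subtractf[symmetric] scaleR_left_diff_distrib)
  qed
  define Bd where "Bd = (\<Sum>g\<in>S. \<Sum>i\<in>UNIV. \<bar>g $ i\<bar>)"
  have pbound: "\<bar>pj j $ i\<bar> \<le> Bd" for j i
  proof -
    have "real_of_int \<bar>pj j $ i\<bar> = \<bar>rvec (pj j) $ i\<bar>" by (simp add: rvec_def)
    also have "\<dots> = \<bar>\<Sum>g\<in>S. (real (N j) * lam g - of_int \<lfloor>real (N j) * lam g\<rfloor>) * real_of_int (g $ i)\<bar>"
      unfolding rpj by (simp add: sum_component rvec_def)
    also have "\<dots> \<le> (\<Sum>g\<in>S. \<bar>(real (N j) * lam g - of_int \<lfloor>real (N j) * lam g\<rfloor>) * real_of_int (g $ i)\<bar>)"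
      by (rule sum_abs)
    also have "\<dots> \<le> (\<Sum>g\<in>S. real_of_int (\<Sum>i\<in>UNIV. \<bar>g $ i\<bar>))"
    proof (rule sum_mono)
      fix g assume "g \<in> S"
      define f where "f = real (N j) * lam g - of_int \<lfloor>real (N j) * lam g\<rfloor>"
      have f01: "0 \<le> f" "f \<le> 1" unfolding f_def by linarith+
      have "\<bar>f * real_of_int (g $ i)\<bar> \<le> \<bar>real_of_int (g $ i)\<bar>"
        using f01 by (simp add: abs_mult mult_left_le_one_le)
      also have "\<dots> \<le> real_of_int (\<Sum>i\<in>UNIV. \<bar>g $ i\<bar>)"
        by (simp only: of_int_abs[symmetric] of_int_le_iff) (rule member_le_sum, auto)
      finally show "\<bar>(real (N j) * lam g - of_int \<lfloor>real (N j) * lam g\<rfloor>) * real_of_int (g $ i)\<bar>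
          \<le> real_of_int (\<Sum>i\<in>UNIV. \<bar>g $ i\<bar>)" unfolding f_def .
    qed
    also have "\<dots> = real_of_int Bd" unfolding Bd_def by simp
    finally show ?thesis by linarith
  qed
  have "finite (range pj)"
    by (rule finite_subset[OF _ finite_box[of Bd]]) (auto simp: pbound)
  then obtain j0 where "\<not> finite {j \<in> UNIV. pj j = pj j0}"
    using pigeonhole_infinite[of "UNIV :: nat set" pj] by auto
  define J where "J = {j. pj j = pj j0}"
  have infJ: "infinite J" using \<open>\<not> finite _\<close> unfolding J_def by simp
  obtain a b where ab: "a \<in> M" "b \<in> M" "pj j0 = a - b" using gp by blast
  define Wset where "Wset = (\<lambda>\<sigma>. span (range (\<lambda>i. rvec (\<sigma> i)))) ` (Fun - Good)"
  have "\<exists>m\<in>monoid_gen G. rvec b + rvec m \<notin> \<Union>Wset"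
    by (rule generic[OF fG _ spanH]) (use HM MG fFun in \<open>auto simp: Wset_def Good_def\<close>)
  then obtain m3 where m3: "m3 \<in> M" "rvec b + rvec m3 \<notin> \<Union>Wset" using MG by blast
  define w where "w = b + m3"
  define c where "c = of_nat Dn *s w"
  have rc: "rvec c = real Dn *\<^sub>R rvec w" unfolding c_def by (simp add: rvec_smult)
  have cW: "rvec c \<notin> span (range (\<lambda>i. rvec (\<sigma> i)))" if "\<sigma> \<in> Fun - Good" for \<sigma>
  proof
    assume "rvec c \<in> span (range (\<lambda>i. rvec (\<sigma> i)))"
    then have "inverse (real Dn) *\<^sub>R rvec c \<in> span (range (\<lambda>i. rvec (\<sigma> i)))" by (rule span_scale)
    then have "rvec w \<in> span (range (\<lambda>i. rvec (\<sigma> i)))" using Dn1 by (simp add: rc)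
    then show False using m3(2) that unfolding Wset_def w_def by (auto simp: rvec_add)
  qed
  define z where "z j = of_nat (N j) *s x + c" for j
  have zM: "z j \<in> M" if "j \<in> J" for j
  proof -
    have fl: "\<lfloor>real (N j) * lam g\<rfloor> *s g = of_nat (nat \<lfloor>real (N j) * lam g\<rfloor>) *s g" if "g \<in> S" for g
      using S(3)[OF that] by simp
    have "z j = (\<Sum>g\<in>S. of_nat (nat \<lfloor>real (N j) * lam g\<rfloor>) *s g) + (a + (of_nat (Dn - 1) *s b + of_nat Dn *s m3))"
    proof -
      have "of_nat (N j) *s x = (\<Sum>g\<in>S. \<lfloor>real (N j) * lam g\<rfloor> *s g) + pj j" unfolding pj_def by simp
      also have "pj j = a - b" using that ab unfolding J_def by simp
      finally have "z j = (\<Sum>g\<in>S. \<lfloor>real (N j) * lam g\<rfloor> *s g) + (a - b + c)" unfolding z_def by simp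
      also have "a - b + c = a + (of_nat (Dn - 1) *s b + of_nat Dn *s m3)"
      proof -
        obtain k where k: "Dn = Suc k" using Dn1 by (cases Dn) auto
        show ?thesis unfolding c_def w_def k by (simp add: vec_eq_iff algebra_simps)
      qed
      also have "(\<Sum>g\<in>S. \<lfloor>real (N j) * lam g\<rfloor> *s g) = (\<Sum>g\<in>S. of_nat (nat \<lfloor>real (N j) * lam g\<rfloor>) *s g)"
        by (rule sum.cong[OF refl fl])
      finally show ?thesis .
    qed
    also have "\<dots> \<in> M" using S(2) ab m3 by (intro Madd Msum Msm) auto
    finally show ?thesis .
  qed
  have ex1: "\<forall>j. \<exists>y::'n \<Rightarrow> int^'n. \<exists>\<alpha>. j \<in> J \<longrightarrow> (\<forall>i. y i \<in> H) \<and> z j = (\<Sum>i\<in>UNIV. of_nat (\<alpha> i) *s y i)"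
  proof
    fix j
    show "\<exists>y::'n \<Rightarrow> int^'n. \<exists>\<alpha>. j \<in> J \<longrightarrow> (\<forall>i. y i \<in> H) \<and> z j = (\<Sum>i\<in>UNIV. of_nat (\<alpha> i) *s y i)"
    proof (cases "j \<in> J")
      case True
      then show ?thesis using icp'[OF zM[OF True]] by blast
    qed simp
  qed
  obtain Y :: "nat \<Rightarrow> 'n \<Rightarrow> int^'n" where Yp: "\<forall>j. \<exists>\<alpha>. j \<in> J \<longrightarrow> (\<forall>i. Y j i \<in> H) \<and> z j = (\<Sum>i\<in>UNIV. of_nat (\<alpha> i) *s Y j i)"
    using choice[OF ex1] by (elim exE)
  obtain Al :: "nat \<Rightarrow> 'n \<Rightarrow> nat" where Alp: "\<forall>j. j \<in> J \<longrightarrow> (\<forall>i. Y j i \<in> H) \<and> z j = (\<Sum>i\<in>UNIV. of_nat (Al j i) *s Y j i)"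
    using choice[OF Yp] by (elim exE)
  have YA: "\<And>j. j \<in> J \<Longrightarrow> (\<forall>i. Y j i \<in> H) \<and> z j = (\<Sum>i\<in>UNIV. of_nat (Al j i) *s Y j i)"
    using Alp by blast
  have "Y ` J \<subseteq> Fun" using YA unfolding Fun_def by auto
  then have "finite (Y ` J)" using fFun finite_subset by blast
  then obtain j1 where j1: "j1 \<in> J" "\<not> finite {j \<in> J. Y j = Y j1}"
    using pigeonhole_infinite[OF infJ] by blast
  define J' where "J' = {j \<in> J. Y j = Y j1}"
  define \<sigma> where "\<sigma> = Y j1"
  have infJ': "infinite J'" using j1 unfolding J'_def by simp
  have j1J': "j1 \<in> J'" using j1 unfolding J'_def by simp
  have zrep: "z j = (\<Sum>i\<in>UNIV. of_nat (Al j i) *s \<sigma> i)" if "j \<in> J'" for j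
    using YA that unfolding J'_def \<sigma>_def by auto
  have rz: "rvec (z j) = real (N j) *\<^sub>R rvec x + rvec c" for j
    unfolding z_def by (simp add: rvec_add rvec_smult)
  have sF: "\<sigma> \<in> Fun" using YA j1 unfolding Fun_def \<sigma>_def by auto
  have sG: "\<sigma> \<in> Good"
  proof (rule ccontr)
    assume nG: "\<sigma> \<notin> Good"
    define W where "W = span (range (\<lambda>i. rvec (\<sigma> i)))"
    have zW: "rvec (z j) \<in> W" if "j \<in> J'" for j
      unfolding zrep[OF that] W_def
      by (simp add: rvec_sum rvec_smult) (intro span_sum span_scale span_base, auto)
    have "infinite (J' - {j1})" using infJ' by simp
    then have "J' - {j1} \<noteq> {}" by (metis finite.emptyI)
    then obtain j2 where "j2 \<in> J' - {j1}" by blast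
    then have j2: "j2 \<in> J'" "j2 \<noteq> j1" by auto
    have "rvec (z j1) - rvec (z j2) \<in> W" using zW j1J' j2 W_def subspace_diff subspace_span by blast
    then have dW: "(real (N j1) - real (N j2)) *\<^sub>R rvec x \<in> W" by (simp add: rz scaleR_left_diff_distrib)
    have "real (N j1) - real (N j2) \<noteq> 0" using j2 Dn1 unfolding N_def by simp
    have "inverse (real (N j1) - real (N j2)) *\<^sub>R ((real (N j1) - real (N j2)) *\<^sub>R rvec x) \<in> W"
      using dW unfolding W_def by (rule span_scale)
    then have xW: "rvec x \<in> W" using \<open>real (N j1) - real (N j2) \<noteq> 0\<close> by simp
    have "rvec (z j1) - real (N j1) *\<^sub>R rvec x \<in> W"
      using zW[OF j1J'] xW unfolding W_def by (intro span_diff span_scale) auto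
    then have "rvec c \<in> W" by (simp add: rz)
    then show False using cW[of \<sigma>] sF nG unfolding W_def by auto
  qed
  have spanS: "span (range (\<lambda>i. rvec (\<sigma> i))) = UNIV" using sG unfolding Good_def by simp
  obtain \<xi> where xi: "smat \<sigma> *v \<xi> = rvec x" using smat_solve[OF spanS] by blast
  obtain \<eta> where eta: "smat \<sigma> *v \<eta> = rvec w" using smat_solve[OF spanS] by blast
  define \<gamma> where "\<gamma> = real Dn *\<^sub>R \<eta>"
  have gam: "smat \<sigma> *v \<gamma> = rvec c"
  proof -
    have "smat \<sigma> *v \<gamma> = real Dn *\<^sub>R (smat \<sigma> *v \<eta>)"
      unfolding \<gamma>_def smat_mult by (simp add: scaleR_sum_right)
    then show ?thesis using eta rc by simp
  qed
  have coord: "real (Al j i) = real (N j) * \<xi> $ i + \<gamma> $ i" if "j \<in> J'" for j i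
  proof -
    have "smat \<sigma> *v (\<chi> i. real (Al j i)) = rvec (z j)"
      unfolding smat_mult zrep[OF that] by (simp add: rvec_sum rvec_smult)
    also have "\<dots> = smat \<sigma> *v (real (N j) *\<^sub>R \<xi> + \<gamma>)"
    proof -
      have "smat \<sigma> *v (real (N j) *\<^sub>R \<xi> + \<gamma>) = real (N j) *\<^sub>R (smat \<sigma> *v \<xi>) + smat \<sigma> *v \<gamma>"
        unfolding smat_mult by (simp add: scaleR_sum_right scaleR_add_left sum.distrib)
      then show ?thesis using xi gam rz by simp
    qed
    finally have "(\<chi> i. real (Al j i)) = real (N j) *\<^sub>R \<xi> + \<gamma>" by (rule smat_inj[OF spanS])
    then show ?thesis by (simp add: vec_eq_iff)
  qed
  have xiI: "\<xi> $ i \<in> \<int>" for i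
  proof -
    have DI: "real Dn * \<xi> $ i \<in> \<int>" by (rule coordD[OF sG xi])
    have gI: "\<gamma> $ i \<in> \<int>" unfolding \<gamma>_def using coordD[OF sG eta] by simp
    have aI: "real (Al j1 i) \<in> \<int>" by simp
    have "real (Al j1 i) - \<gamma> $ i - real j1 * (real Dn * \<xi> $ i) \<in> \<int>"
      using Ints_diff[OF Ints_diff[OF aI gI] Ints_mult[OF Ints_of_nat[of j1] DI]] .
    also have "real (Al j1 i) - \<gamma> $ i - real j1 * (real Dn * \<xi> $ i) = \<xi> $ i"
      using coord[OF j1J', of i] unfolding N_def by (simp add: algebra_simps)
    finally show ?thesis .
  qed
  have xipos: "\<xi> $ i \<ge> 0" for i
  proof (rule ccontr)
    assume neg: "\<not> \<xi> $ i \<ge> 0"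
    obtain e where e: "\<xi> $ i = of_int e" using xiI Ints_cases by blast
    then have e1: "\<xi> $ i \<le> -1" using neg by simp
    have gI: "\<gamma> $ i \<in> \<int>" unfolding \<gamma>_def using coordD[OF sG eta] by simp
    obtain j where j: "j \<in> J'" "j > nat \<lceil>\<gamma> $ i\<rceil>" using infJ' infinite_nat_iff_unbounded by blast
    have "0 \<le> real (N j) * \<xi> $ i + \<gamma> $ i" using coord[OF j(1), of i] by simp
    also have "\<dots> \<le> - real (N j) + \<gamma> $ i" using mult_left_mono[OF e1, of "real (N j)"] by simp
    finally have "real (N j) \<le> \<gamma> $ i" by simp
    moreover have "real j > \<gamma> $ i" using j(2) by linarith
    moreover have "real (N j) \<ge> real j"
    proof -
      have "j * 1 \<le> j * Dn" by (rule mult_le_mono2[OF Dn1])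
      then have "j \<le> N j" unfolding N_def by linarith
      then show ?thesis by (simp only: of_nat_le_iff)
    qed
    ultimately show False by simp
  qed
  define e where "e i = nat \<lfloor>\<xi> $ i\<rfloor>" for i
  have re: "real (e i) = \<xi> $ i" for i
  proof -
    obtain t where t: "\<xi> $ i = of_int t" using xiI[of i] Ints_cases by blast
    then have "t \<ge> 0" using xipos[of i] by simp
    then show ?thesis unfolding e_def t by simp
  qed
  have xe: "x = (\<Sum>i\<in>UNIV. of_nat (e i) *s \<sigma> i)"
  proof (rule rvec_inj)
    show "rvec x = rvec (\<Sum>i\<in>UNIV. of_nat (e i) *s \<sigma> i)"
      unfolding xi[symmetric] smat_mult by (simp add: rvec_sum rvec_smult re)
  qed
  have sH: "\<sigma> i \<in> H" for i using sF unfolding Fun_def by simp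
  have "x \<in> M" unfolding xe using sH HM by (intro Msum Msm) auto
  moreover have "f_covered M x"
    unfolding f_covered_def
    using sH good_indep[OF spanS] xe unfolding H_def by blast
  ultimately show ?thesis by blast
qed


lemma in_cone: "x \<in> M \<Longrightarrow> rvec x \<in> real_cone M"
  unfolding real_cone_def
  by (rule CollectI, rule exI[of _ "{x}"], rule exI[of _ "\<lambda>_. 1"]) auto

theorem theorem3p2:
  fixes M :: "(int ^ 'n) set"
  assumes "affine_monoid M"
    and "positive_monoid M"
    and "gp M = UNIV"
    and "ICP M"
  shows "M = {x. rvec x \<in> real_cone M} \<and> (\<forall>x\<in>M. f_covered M x)"
proof -
  obtain G where fG: "finite G" and MG: "M = monoid_gen G"
    using assms(1) unfolding affine_monoid_def by blast
  have sub: "gp M \<subseteq> {a - b | a b. a \<in> M \<and> b \<in> M}"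
    by (rule gp_sub) (use mg_0 mg_add[OF fG] MG in auto)
  have gp: "\<exists>a\<in>M. \<exists>b\<in>M. p = a - b" for p
    using sub assms(3) by blast
  have key: "x \<in> M \<and> f_covered M x" if "rvec x \<in> real_cone M" for x
    by (rule main[OF fG MG gp assms(4) that])
  show ?thesis using key in_cone by blast
qed

end
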